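(* Let $\mathbf{A}_C\in\{0,1\}^{U\times N}$, $\mathcal{E}=\{(i,j): [\mathbf{A}_C]_{ij}=1\}$, $\mathbf{B}=\mathbf{A}_C^T\mathbf{A}_C$, and let $\mathbf{u}$ be a unit-norm eigenvector of $\mathbf{B}$ with nonnegative entries associated with $\lambda_{\max}(\mathbf{B})$. For $\mathcal{E}_{\mathcal{R}}\subseteq\mathcal{E}$ define $$f(\mathcal{E}_{\mathcal{R}})=2\sum_{(i,j)\in\mathcal{E}_{\mathcal{R}}}\mathbf{u}^T\mathbf{A}_C^T\mathbf{e}^U_i[\mathbf{u}]_j-\sum_{i=1}^{U}\ \sum_{j:(i,j)\in\mathcal{E}_{\mathcal{R}}}\ \sum_{s:(i,s)\in\mathcal{E}_{\mathcal{R}}}[\mathbf{u}]_j[\mathbf{u}]_s .$$ Then $f$ is a monotonic increasing set function: for all $\mathcal{E}_{\mathcal{R}1}\subseteq\mathcal{E}_{\mathcal{R}2}\subseteq\mathcal{E}$, $f(\mathcal{E}_{\mathcal{R}2})\ge f(\mathcal{E}_{\mathcal{R}1})$.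
   Context: $\mathbf{A}_C$ is the adjacency matrix of a bipartite user–host access graph with $U$ users and $N$ hosts; $\mathcal{E}$ is its edge set. $\mathbf{e}^U_i$ is the $U\times1$ canonical basis vector with $1$ in position $i$; $[\mathbf{u}]_j$ is the $j$-th entry of $\mathbf{u}$. *)

theory Defs
  imports "HOL-Analysis.Analysis"
begin

definition edge_set :: "real ^ 'n ^ 'u \<Rightarrow> ('u \<times> 'n) set" where
  "edge_set A = {(i, j). A $ i $ j = 1}"

definition gram :: "real ^ 'n ^ 'u \<Rightarrow> real ^ 'n ^ 'n" where
  "gram A = transpose A ** A"

definition is_lambda_max :: "real ^ 'n ^ 'n \<Rightarrow> real \<Rightarrow> bool" where
  "is_lambda_max M lam \<longleftrightarrow>
     (\<exists>v. v \<noteq> 0 \<and> M *v v = lam *\<^sub>R v) \<and>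
     (\<forall>mu v. v \<noteq> 0 \<and> M *v v = mu *\<^sub>R v \<longrightarrow> mu \<le> lam)"

definition fset :: "real ^ 'n ^ 'u \<Rightarrow> real ^ 'n \<Rightarrow> ('u \<times> 'n) set \<Rightarrow> real" where
  "fset A u ER =
     2 * (\<Sum>(i, j)\<in>ER. (u \<bullet> (transpose A *v axis i 1)) * u $ j)
     - (\<Sum>i\<in>UNIV. \<Sum>j\<in>{j. (i, j) \<in> ER}. \<Sum>s\<in>{s. (i, s) \<in> ER}. u $ j * u $ s)"

end

theory Submission
  imports Defs
begin

lemma row_val:
  fixes A :: "real ^ 'n ^ 'u" and u :: "real ^ 'n"
  shows "u \<bullet> (transpose A *v axis i 1) = (\<Sum>j\<in>UNIV. u $ j * A $ i $ j)"
proof -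
  have "(transpose A *v axis i 1) $ j = A $ i $ j" for j
    by (simp add: matrix_vector_mult_def transpose_def axis_def if_distrib cong: if_cong)
  then show ?thesis by (simp add: inner_vec_def)
qed

lemma fset_eq:
  fixes A :: "real ^ 'n ^ 'u" and u :: "real ^ 'n"
  shows "fset A u E = (\<Sum>i\<in>UNIV. 2 * (u \<bullet> (transpose A *v axis i 1)) * (\<Sum>j\<in>{j. (i, j) \<in> E}. u $ j)
        - (\<Sum>j\<in>{j. (i, j) \<in> E}. u $ j)^2)"
proof -
  have E: "E = Sigma UNIV (\<lambda>i. {j. (i, j) \<in> E})" by auto
  have 1: "(\<Sum>(i, j)\<in>E. (u \<bullet> (transpose A *v axis i 1)) * u $ j)
      = (\<Sum>i\<in>UNIV. \<Sum>j\<in>{j. (i, j) \<in> E}. (u \<bullet> (transpose A *v axis i 1)) * u $ j)"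
    by (subst E, subst sum.Sigma) auto
  have 2: "(\<Sum>j\<in>{j. (i, j) \<in> E}. \<Sum>s\<in>{s. (i, s) \<in> E}. u $ j * u $ s)
     = (\<Sum>j\<in>{j. (i, j) \<in> E}. u $ j)^2" for i
    by (simp add: power2_eq_square sum_product)
  show ?thesis
    unfolding fset_def 1 2
    by (simp add: sum_distrib_left sum_subtractf mult.assoc)
qed

theorem lemma3:
  fixes A :: "real ^ 'n ^ 'u" and u :: "real ^ 'n" and lam :: real
    and ER1 ER2 :: "('u \<times> 'n) set"
  assumes binary: "\<forall>i j. A $ i $ j \<in> {0, 1}"
    and lmax: "is_lambda_max (gram A) lam"
    and eig: "gram A *v u = lam *\<^sub>R u"
    and unit: "norm u = 1"
    and nonneg: "\<forall>j. u $ j \<ge> 0"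
    and sub12: "ER1 \<subseteq> ER2"
    and sub2: "ER2 \<subseteq> edge_set A"
  shows "fset A u ER2 \<ge> fset A u ER1"
proof -
  define r where "r i = u \<bullet> (transpose A *v axis i 1)" for i
  define S where "S (E::('u \<times> 'n) set) (i::'u) = (\<Sum>j\<in>{j. (i, j) \<in> E}. u $ j)" for E i
  have key: "2 * r i * S ER1 i - (S ER1 i)^2 \<le> 2 * r i * S ER2 i - (S ER2 i)^2" for i
  proof -
    have a: "S ER1 i \<le> S ER2 i" unfolding S_def
      by (rule sum_mono2) (use sub12 nonneg in auto)
    have "S ER2 i = (\<Sum>j\<in>{j. (i, j) \<in> ER2}. u $ j * A $ i $ j)"
      unfolding S_def using sub2 by (intro sum.cong) (auto simp: edge_set_def)
    also have "\<dots> \<le> (\<Sum>j\<in>UNIV. u $ j * A $ i $ j)"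
      proof (rule sum_mono2)
      fix b
      have "0 \<le> A $ i $ b" using binary by (metis empty_iff insert_iff order_refl zero_le_one)
      then show "0 \<le> u $ b * A $ i $ b" using nonneg by simp
    qed auto
    also have "\<dots> = r i" unfolding r_def by (rule row_val[symmetric])
    finally have b: "S ER2 i \<le> r i" .
    have c: "0 \<le> S ER1 i" unfolding S_def using nonneg by (simp add: sum_nonneg)
    have "(2 * r i * S ER2 i - (S ER2 i)^2) - (2 * r i * S ER1 i - (S ER1 i)^2)
        = (S ER2 i - S ER1 i) * (2 * r i - S ER1 i - S ER2 i)"
      by (simp add: algebra_simps power2_eq_square)
    also have "\<dots> \<ge> 0" using a b c by (intro mult_nonneg_nonneg) auto
    finally show ?thesis by simp
  qed
  show ?thesis
    unfolding fset_eq r_def[symmetric] S_def[symmetric]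
    by (rule sum_mono) (rule key)
qed

end
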